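(* Let $l\ge 6$ be an integer, $m=l+4$, and let $R_p=L_{[n_1,\dots,n_l]}$ for some $[n_1,\dots,n_l]\in T_6$ of length $l$. Then the negative definite lattice $N=4A_1\oplus R_p$ of rank $m$ admits no isometric embedding into the lattice $I_{1,m}=\langle 1\rangle\oplus m\langle -1\rangle$.
   Context: For integers $n_j\ge2$, $L_{[n_1,\dots,n_l]}$ is the lattice with basis $e_1,\dots,e_l$ and tridiagonal Gram matrix with diagonal $-n_1,\dots,-n_l$ and entries $1$ directly above and below the diagonal. $T_6$ is the set of Hirzebruch-Jung continued fractions $[n_1,\dots,n_l]=n_1-1/(n_2-\cdots-1/n_l)$ (all $n_j\ge2$) equal to $\frac{6n^2}{6na-1}$ for some integers $n>a>0$ with $\gcd(n,a)=1$. $A_1$ is the lattice $\langle -2\rangle$; $\langle k\rangle$ is the rank one lattice with generator of square $k$. *)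

theory Defs
  imports Complex_Main
begin

fun hj_cf :: "int list \<Rightarrow> rat" where
  "hj_cf [] = 0"
| "hj_cf [n] = of_int n"
| "hj_cf (n # ns) = of_int n - 1 / hj_cf ns"

definition T6 :: "int list set" where
  "T6 = {ns. ns \<noteq> [] \<and> (\<forall>x\<in>set ns. x \<ge> 2) \<and>
          (\<exists>n a :: int. n > a \<and> a > 0 \<and> gcd n a = 1 \<and>
             hj_cf ns = of_int (6 * n^2) / of_int (6 * n * a - 1))}"

(* Gram matrix of L_[n1,...,nl] w.r.t. basis e_1..e_l (indices 0..l-1) *)
definition L_gram :: "int list \<Rightarrow> nat \<Rightarrow> nat \<Rightarrow> int" where
  "L_gram ns i j = (if i = j then - (ns ! i)
                    else if i = j + 1 \<or> j = i + 1 then 1 else 0)"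

(* Gram matrix of N = 4A_1 \<oplus> L_[ns]; indices 0..3 are the A_1 summands,
   indices 4..l+3 the basis of L_[ns] *)
definition N_gram :: "int list \<Rightarrow> nat \<Rightarrow> nat \<Rightarrow> int" where
  "N_gram ns i j = (if i < 4 \<and> j < 4 then (if i = j then -2 else 0)
                    else if 4 \<le> i \<and> 4 \<le> j then L_gram ns (i - 4) (j - 4)
                    else 0)"

definition I1m_form :: "nat \<Rightarrow> (nat \<Rightarrow> int) \<Rightarrow> (nat \<Rightarrow> int) \<Rightarrow> int" where
  "I1m_form m x y = x 0 * y 0 - (\<Sum>k = 1..m. x k * y k)"

(* An isometric embedding of the lattice with Gram matrix G (rank r) into I_{1,m}:
   images v 0, ..., v (r-1) of the basis in Z^{m+1} (coordinates 0..m), which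
   are Z-linearly independent (injectivity) and reproduce the Gram matrix. *)
definition isometric_embedding_into_I1 ::
    "nat \<Rightarrow> (nat \<Rightarrow> nat \<Rightarrow> int) \<Rightarrow> nat \<Rightarrow> (nat \<Rightarrow> nat \<Rightarrow> int) \<Rightarrow> bool" where
  "isometric_embedding_into_I1 r G m v \<longleftrightarrow>
     (\<forall>i<r. \<forall>k>m. v i k = 0) \<and>
     (\<forall>i<r. \<forall>j<r. I1m_form m (v i) (v j) = G i j) \<and>
     (\<forall>c :: nat \<Rightarrow> int. (\<forall>k\<le>m. (\<Sum>i<r. c i * v i k) = 0) \<longrightarrow> (\<forall>i<r. c i = 0))"

end

theory Submission
  imports Defs "Jordan_Normal_Form.Determinant"
begin

fun D :: "int list \<Rightarrow> int" where
  "D [] = 1" | "D [c] = c" | "D (c#d#cs) = c * D (d#cs) - D cs"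

lemma D_pos: "cs \<noteq> [] \<Longrightarrow> (\<forall>x\<in>set cs. x \<ge> 2) \<Longrightarrow> D (tl cs) < D cs \<and> 1 \<le> D (tl cs)"
proof (induction cs rule: D.induct)
  case (3 c d cs)
  then have IH: "D cs < D (d#cs)" "1 \<le> D cs" by auto
  have "c \<ge> 2" using 3 by auto
  have "c * D (d#cs) \<ge> 2 * D (d#cs)" using mult_right_mono[of 2 c "D(d#cs)"] IH \<open>c\<ge>2\<close> by linarith
  then show ?case using IH by (simp only: D.simps list.sel) linarith
qed auto

lemma D_cf: "cs \<noteq> [] \<Longrightarrow> (\<forall>x\<in>set cs. x \<ge> 2) \<Longrightarrow> hj_cf cs = of_int (D cs) / of_int (D (tl cs))"
proof (induction cs rule: D.induct)
  case (3 c d cs)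
  then have IH: "hj_cf (d#cs) = of_int (D (d#cs)) / of_int (D cs)" by auto
  have "\<forall>x\<in>set (d#cs). x \<ge> 2" using 3 by auto
  then have p: "D cs < D (d#cs)" "1 \<le> D cs" using D_pos[of "d#cs"] by auto
  then have "D (d#cs) \<noteq> 0" "D cs \<noteq> 0" by auto
  have "hj_cf (c#d#cs) = of_int c - 1 / (of_int (D (d#cs)) / of_int (D cs))" using IH by simp
  also have "\<dots> = of_int (c*D(d#cs) - D cs)/of_int(D(d#cs))" using \<open>D (d#cs) \<noteq> 0\<close> \<open>D cs \<noteq> 0\<close> by (simp add: field_simps)
  finally show ?case by simp
qed auto

lemma D_coprime: "coprime (D cs) (D (tl cs))"
proof (induction cs rule: D.induct)
  case (3 c d cs)
  have "gcd (D(d#cs)) (c*D(d#cs) + - D cs) = gcd (D(d#cs)) (- D cs)" by (rule gcd_add_mult)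
  then have "gcd (D(d#cs)) (c*D(d#cs) - D cs) = gcd (D(d#cs)) (D cs)" by simp
  moreover have "gcd (D(d#cs)) (D cs) = 1" using 3 by (simp add: coprime_iff_gcd_eq_1)
  ultimately show ?case by (simp add: coprime_iff_gcd_eq_1 gcd.commute)
qed auto

lemma T6_D:
  assumes "ns \<in> T6"
  shows "\<exists>n a::int. n > 0 \<and> D ns = 6*n^2 \<and> D (tl ns) = 6*n*a - 1"
proof -
  from assms obtain n a :: int where ne: "ns \<noteq> []" and ge: "\<forall>x\<in>set ns. x \<ge> 2"
    and na: "n > a" "a > 0" "gcd n a = 1"
    and eq: "hj_cf ns = of_int (6 * n^2) / of_int (6 * n * a - 1)"
    unfolding T6_def by auto
  define p where "p = D ns"
  define q where "q = D (tl ns)"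
  have q1: "q \<ge> 1" using D_pos[OF ne ge] unfolding q_def by auto
  have "n * a > 0" using na by (simp add: mult_pos_pos)
  then have r1: "6*n*a - 1 > 0" by (simp add: mult.assoc)
  have "(of_int p :: rat) / of_int q = of_int (6 * n^2) / of_int (6 * n * a - 1)"
    using eq D_cf[OF ne ge] unfolding p_def q_def by simp
  then have "(of_int p :: rat) * of_int (6 * n * a - 1) = of_int (6 * n^2) * of_int q"
  proof -
    have qn: "(of_int q :: rat) \<noteq> 0" using q1 by simp
    have rn: "(of_int (6 * n * a - 1) :: rat) \<noteq> 0" unfolding of_int_eq_0_iff using r1 by linarith
    then show ?thesis using \<open>(of_int p :: rat) / of_int q = _\<close> by (metis frac_eq_eq[OF qn rn])
  qed
  then have E: "p * (6 * n * a - 1) = 6 * n^2 * q"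
    by (metis of_int_eq_iff of_int_mult)
  have cop: "coprime q p" using D_coprime[of ns] unfolding p_def q_def by (simp add: coprime_commute)
  have "q dvd p * (6 * n * a - 1)" using E by simp
  then have d1: "q dvd 6 * n * a - 1" using cop by (simp add: coprime_dvd_mult_right_iff)
  have c2: "coprime (6 * n * a - 1) (6 * n)"
  proof -
    have "coprime (6 * n * a - 1) (6 * n * a)" by (simp add: coprime_commute)
    then show ?thesis by (metis coprime_mult_right_iff mult.assoc mult.commute)
  qed
  have c3: "coprime (6 * n * a - 1) (6 * n^2)"
  proof -
    have "coprime (6 * n * a - 1) n" using c2 by (metis coprime_mult_right_iff)
    then have "coprime (6 * n * a - 1) (6*n*n)" using c2 by simp
    then show ?thesis by (simp add: power2_eq_square mult.assoc)
  qed
  have "6 * n * a - 1 dvd 6 * n^2 * q" using E by (metis dvd_triv_right)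
  then have d2: "6 * n * a - 1 dvd q" using c3 by (simp add: coprime_dvd_mult_right_iff)
  have qq: "q = 6 * n * a - 1" using zdvd_antisym_nonneg[OF _ _ d1 d2] q1 r1 by linarith
  then have "p = 6 * n^2" using E r1 by simp
  moreover have "n > 0" using na by linarith
  ultimately show ?thesis using qq unfolding p_def q_def by blast
qed

lemma mat_delete_00: "mat_delete (mat (Suc n) (Suc n) (\<lambda>(i,j). f i j)) 0 0 = mat n n (\<lambda>(i,j). f (Suc i) (Suc j))"
  by (rule eq_matI) (auto simp: mat_delete_def)

lemma det_first_col:
  assumes "\<And>i. 0 < i \<Longrightarrow> i < Suc n \<Longrightarrow> f i 0 = (0::'a::comm_ring_1)"
  shows "det (mat (Suc n) (Suc n) (\<lambda>(i,j). f i j)) = f 0 0 * det (mat n n (\<lambda>(i,j). f (Suc i) (Suc j)))"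
proof -
  let ?A = "mat (Suc n) (Suc n) (\<lambda>(i,j). f i j)"
  have "det ?A = (\<Sum>i<Suc n. ?A $$ (i,0) * cofactor ?A i 0)"
    by (rule laplace_expansion_column) auto
  also have "\<dots> = ?A $$ (0,0) * cofactor ?A 0 0 + (\<Sum>i<n. ?A $$ (Suc i,0) * cofactor ?A (Suc i) 0)"
    by (rule sum.lessThan_Suc_shift)
  also have "(\<Sum>i<n. ?A $$ (Suc i,0) * cofactor ?A (Suc i) 0) = 0"
    using assms by (intro sum.neutral) auto
  finally show ?thesis by (simp add: cofactor_def mat_delete_00)
qed

lemma det_first_row:
  assumes "\<And>j. 0 < j \<Longrightarrow> j < Suc n \<Longrightarrow> f 0 j = (0::'a::comm_ring_1)"
  shows "det (mat (Suc n) (Suc n) (\<lambda>(i,j). f i j)) = f 0 0 * det (mat n n (\<lambda>(i,j). f (Suc i) (Suc j)))"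
proof -
  have "det (mat (Suc n) (Suc n) (\<lambda>(i,j). f i j)) = det (transpose_mat (mat (Suc n) (Suc n) (\<lambda>(i,j). f i j)))"
    by (rule det_transpose[symmetric]) auto
  also have "transpose_mat (mat (Suc n) (Suc n) (\<lambda>(i,j). f i j)) = mat (Suc n) (Suc n) (\<lambda>(i,j). f j i)"
    by (rule eq_matI) auto
  also have "det \<dots> = f 0 0 * det (mat n n (\<lambda>(i,j). f (Suc j) (Suc i)))"
    using det_first_col[of n "\<lambda>i j. f j i"] assms by simp
  also have "det (mat n n (\<lambda>(i,j). f (Suc j) (Suc i))) = det (transpose_mat (mat n n (\<lambda>(i,j). f (Suc i) (Suc j))))"
    by (rule arg_cong[where f=det]) (rule eq_matI, auto)
  also have "\<dots> = det (mat n n (\<lambda>(i,j). f (Suc i) (Suc j)))" by (rule det_transpose) auto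
  finally show ?thesis .
qed

lemma L_gram_Suc: "L_gram (c#cs) (Suc i) (Suc j) = L_gram cs i j"
  unfolding L_gram_def by auto

lemma det_chain: "det (mat (length cs) (length cs) (\<lambda>(i,j). L_gram cs i j)) = (-1)^(length cs) * D cs"
proof (induction cs rule: D.induct)
  case 1
  then show ?case by (simp add: det_def)
next
  case (2 c)
  have "det (mat (Suc 0) (Suc 0) (\<lambda>(i,j). L_gram [c] i j)) = L_gram [c] 0 0 * det (mat 0 0 (\<lambda>(i,j). L_gram [c] (Suc i) (Suc j)))"
    by (rule det_first_col) auto
  then show ?case by (simp add: L_gram_def det_def)
next
  case (3 c d cs)
  define k where "k = length cs"
  define A where "A = mat (Suc (Suc k)) (Suc (Suc k)) (\<lambda>(i,j). L_gram (c#d#cs) i j)"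
  have "det A = (\<Sum>i<Suc (Suc k). A $$ (i,0) * cofactor A i 0)"
    unfolding A_def by (rule laplace_expansion_column) auto
  also have "\<dots> = A $$ (0,0) * cofactor A 0 0 + (A $$ (1,0) * cofactor A 1 0 + (\<Sum>i<k. A $$ (Suc (Suc i),0) * cofactor A (Suc (Suc i)) 0))"
    by (simp only: sum.lessThan_Suc_shift One_nat_def)
  also have "(\<Sum>i<k. A $$ (Suc (Suc i),0) * cofactor A (Suc (Suc i)) 0) = 0"
    by (intro sum.neutral) (auto simp: A_def L_gram_def)
  also have "A $$ (0,0) = - c" unfolding A_def L_gram_def by simp
  also have "A $$ (1,0) = 1" unfolding A_def L_gram_def by simp
  also have "cofactor A 0 0 = det (mat (Suc k) (Suc k) (\<lambda>(i,j). L_gram (d#cs) i j))"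
    unfolding cofactor_def A_def mat_delete_00 L_gram_Suc by simp
  also have "\<dots> = (-1)^(Suc k) * D (d#cs)" using 3(1) unfolding k_def by simp
  also have "cofactor A 1 0 = - det (mat (Suc k) (Suc k) (\<lambda>(i,j). L_gram (c#d#cs) (if i = 0 then 0 else Suc i) (Suc j)))"
    unfolding cofactor_def A_def mat_delete_def
    by (simp, rule arg_cong[where f=det], rule eq_matI, auto)
  also have "det (mat (Suc k) (Suc k) (\<lambda>(i,j). L_gram (c#d#cs) (if i = 0 then 0 else Suc i) (Suc j)))
     = L_gram (c#d#cs) 0 (Suc 0) * det (mat k k (\<lambda>(i,j). L_gram (c#d#cs) (Suc (Suc i)) (Suc (Suc j))))"
    by (rule det_first_row[where f="\<lambda>i j. L_gram (c#d#cs) (if i = 0 then 0 else Suc i) (Suc j)", simplified]) (auto simp: L_gram_def)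
  also have "det (mat k k (\<lambda>(i,j). L_gram (c#d#cs) (Suc (Suc i)) (Suc (Suc j)))) = (-1)^k * D cs"
    using 3(2) unfolding k_def L_gram_Suc by simp
  finally have "det A = (-1)^(Suc (Suc k)) * (c * D (d#cs) - D cs)"
    by (simp add: L_gram_def algebra_simps)
  then show ?case unfolding A_def k_def by simp
qed

lemma det_prefix:
  "det (mat (k+n) (k+n) (\<lambda>(i,j). if i<k \<and> j<k then (if i=j then -2 else 0) else if k \<le> i \<and> k \<le> j then g (i-k) (j-k) else (0::int)))
   = (-2)^k * det (mat n n (\<lambda>(i,j). g i j))"
proof (induction k)
  case 0
  then show ?case by simp
next
  case (Suc k)
  let ?f = "\<lambda>i j. if i<Suc k \<and> j<Suc k then (if i=j then -2 else 0) else if Suc k \<le> i \<and> Suc k \<le> j then g (i-Suc k) (j-Suc k) else (0::int)"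
  have m_eq: "mat (k+n) (k+n) (\<lambda>(i,j). ?f (Suc i) (Suc j))
     = mat (k+n) (k+n) (\<lambda>(i,j). if i<k \<and> j<k then (if i=j then -2 else 0) else if k \<le> i \<and> k \<le> j then g (i-k) (j-k) else (0::int))"
    by (rule eq_matI) auto
  have "det (mat (Suc (k+n)) (Suc (k+n)) (\<lambda>(i,j). ?f i j)) = ?f 0 0 * det (mat (k+n) (k+n) (\<lambda>(i,j). ?f (Suc i) (Suc j)))"
    by (rule det_first_col) auto
  also have "\<dots> = (-2) * det (mat (k+n) (k+n) (\<lambda>(i,j). if i<k \<and> j<k then (if i=j then -2 else 0) else if k \<le> i \<and> k \<le> j then g (i-k) (j-k) else (0::int)))"
    by (simp only: m_eq) simp
  finally show ?case using Suc by simp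
qed

lemma det_diag: "det (mat n n (\<lambda>(i,j). if i = j then g i else (0::int))) = (\<Prod>i<n. g i)"
proof (induction n arbitrary: g)
  case 0
  then show ?case by (simp add: det_def)
next
  case (Suc n)
  have "det (mat (Suc n) (Suc n) (\<lambda>(i,j). if i = j then g i else (0::int))) = g 0 * det (mat n n (\<lambda>(i,j). if i = j then g (Suc i) else (0::int)))"
    by (subst det_first_col) auto
  also have "\<dots> = g 0 * (\<Prod>i<n. g (Suc i))" using Suc[of "\<lambda>i. g (Suc i)"] by simp
  also have "\<dots> = (\<Prod>i<Suc n. g i)" by (rule prod.lessThan_Suc_shift[symmetric])
  finally show ?case .
qed

lemma D_step: "j < length ns \<Longrightarrow> D (drop j ns) = ns!j * D (drop (Suc j) ns) - (if Suc j < length ns then D (drop (Suc (Suc j)) ns) else 0)"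
proof -
  assume j: "j < length ns"
  have e: "drop j ns = ns!j # drop (Suc j) ns" using j by (rule Cons_nth_drop_Suc[symmetric])
  show ?thesis
  proof (cases "drop (Suc j) ns")
    case Nil
    then have "\<not> Suc j < length ns" by simp
    then show ?thesis using e Nil by simp
  next
    case (Cons d rest)
    then have "Suc j < length ns" by (metis drop_eq_Nil2 list.distinct(1) not_le)
    moreover have "drop (Suc (Suc j)) ns = rest" using Cons by (metis drop_Suc list.sel(3) tl_drop)
    ultimately show ?thesis using e Cons by simp
  qed
qed

lemma chain_sum:
  assumes j: "j < length ns"
  shows "(\<Sum>i<length ns. D (drop (Suc i) ns) * L_gram ns i j) = (if j = 0 then - D ns else 0)"
proof -
  let ?r = "\<lambda>i. D (drop (Suc i) ns)"
  have "(\<Sum>i<length ns. ?r i * L_gram ns i j) = (\<Sum>i<length ns. (if i = j then - ns!j * ?r i else 0) + (if i = Suc j then ?r i else 0) + (if 1 \<le> j \<and> i = j - 1 then ?r i else 0))"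
    by (rule sum.cong) (auto simp: L_gram_def)
  also have "\<dots> = - ns!j * ?r j + (if Suc j < length ns then ?r (Suc j) else 0) + (if 1 \<le> j then ?r (j - 1) else 0)"
    using j by (auto simp: sum.distrib)
  also have "\<dots> = (if j = 0 then - D ns else 0)"
  proof (cases j)
    case 0
    then show ?thesis using D_step[of 0 ns] j by simp
  next
    case (Suc j')
    then show ?thesis using D_step[of j ns] j by simp
  qed
  finally show ?thesis .
qed

lemma pow3_decomp: "(n::int) \<noteq> 0 \<Longrightarrow> \<exists>t b. n = 3^t * b \<and> \<not> 3 dvd b"
proof (induction "nat \<bar>n\<bar>" arbitrary: n rule: less_induct)
  case less
  show ?case
  proof (cases "3 dvd n")
    case False
    show ?thesis by (rule exI[of _ 0], rule exI[of _ n]) (use False in simp)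
  next
    case True
    then obtain n' where n': "n = 3 * n'" by blast
    then have "n' \<noteq> 0" "nat \<bar>n'\<bar> < nat \<bar>n\<bar>" using less.prems by auto
    then obtain t b where "n' = 3^t * b" "\<not> 3 dvd b" using less.hyps by blast
    then show ?thesis using n' by (intro exI[of _ "Suc t"] exI[of _ b]) auto
  qed
qed

lemma sq_mod3_aux: "(x::int) mod 3 = 0 \<and> (\<exists>t. x^2 = 3*t) \<or> (x mod 3 \<noteq> 0 \<and> (\<exists>t. x^2 = 3*t + 1))"
proof -
  define c where "c = x div 3"
  have x: "x = 3*c + x mod 3" unfolding c_def by simp
  have "x mod 3 = 0 \<or> x mod 3 = 1 \<or> x mod 3 = 2" by presburger
  then show ?thesis
  proof (elim disjE)
    assume r: "x mod 3 = 0"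
    then have "x^2 = 3*(3*c^2)" using x by (simp add: power2_eq_square algebra_simps)
    then show ?thesis using r by blast
  next
    assume r: "x mod 3 = 1"
    then have "x^2 = 3*(3*c^2+2*c) + 1" using x by (simp add: power2_eq_square algebra_simps)
    then have "\<exists>t. x^2 = 3*t+1" by blast
    then show ?thesis using r by auto
  next
    assume r: "x mod 3 = 2"
    then have "x = 3*c + 2" using x by simp
    then have "x^2 = 3*(3*c^2+4*c+1) + 1" by (simp add: power2_eq_square algebra_simps)
    then have "\<exists>t. x^2 = 3*t+1" by blast
    then show ?thesis using r by auto
  qed
qed

lemma sq_mod3: "\<exists>t. (x::int)^2 = 3*t \<or> x^2 = 3*t + 1"
  using sq_mod3_aux[of x] by blast

lemma sq_mod3': "\<not> 3 dvd (x::int) \<Longrightarrow> \<exists>t. x^2 = 3*t + 1"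
  using sq_mod3_aux[of x] by (auto simp: dvd_eq_mod_eq_0)

lemma F_sym: "I1m_form m x y = I1m_form m y x"
  unfolding I1m_form_def by (simp add: mult.commute)

lemma F_lin: "finite S \<Longrightarrow> I1m_form m (\<lambda>k. \<Sum>i\<in>S. c i * x i k) y = (\<Sum>i\<in>S. c i * I1m_form m (x i) y)"
  unfolding I1m_form_def
  by (simp add: sum_distrib_left sum_distrib_right sum_subtractf right_diff_distrib sum.swap[of _ S] mult.assoc)

lemma F_cong: "(\<And>k. k \<le> m \<Longrightarrow> x k = x' k) \<Longrightarrow> I1m_form m x y = I1m_form m x' y"
  unfolding I1m_form_def by (auto intro!: sum.cong)

lemma F_scale: "I1m_form m (\<lambda>k. c * x k) y = c * I1m_form m x y"
  unfolding I1m_form_def by (simp add: sum_distrib_left right_diff_distrib mult.assoc)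

lemma F_sum: "I1m_form m x y = (\<Sum>k<Suc m. x k * (if k = 0 then 1 else -1) * y k)"
proof -
  have "(\<Sum>k<Suc m. x k * (if k = 0 then 1 else -1) * y k) = x 0 * y 0 + (\<Sum>k<m. x (Suc k) * (-1) * y (Suc k))"
    by (subst sum.lessThan_Suc_shift) simp
  also have "(\<Sum>k<m. x (Suc k) * (-1) * y (Suc k)) = - (\<Sum>k=1..m. x k * y k)"
    by (simp add: sum.atLeast1_atMost_eq sum_negf)
  finally show ?thesis unfolding I1m_form_def by simp
qed

lemma F_unit: "k \<le> m \<Longrightarrow> I1m_form m (\<lambda>j. if j = k then 1 else 0) z = (if k = 0 then z 0 else - z k)"
proof -
  assume k: "k \<le> m"
  have "(\<Sum>j=1..m. (if j = k then 1 else 0) * z j) = (\<Sum>j=1..m. if j = k then z j else 0)" by (rule sum.cong) auto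
  also have "\<dots> = (if k \<in> {1..m} then z k else 0)" by (simp add: sum.delta)
  finally show ?thesis unfolding I1m_form_def using k by auto
qed

lemma descent:
  "\<forall>x w. (\<forall>i<K. I1m_form m x (u i) = 0) \<longrightarrow> I1m_form m x x = 3^(2*s+1) * w \<longrightarrow> \<not> 3 dvd w \<longrightarrow>
     (\<exists>z k. k \<le> m \<and> (\<forall>i<K. I1m_form m z (u i) = 0) \<and> 3 dvd I1m_form m z z \<and> \<not> 3 dvd z k)"
proof (induction s)
  case 0
  show ?case
  proof (intro allI impI)
    fix x w
    assume o: "\<forall>i<K. I1m_form m x (u i) = 0" and xx: "I1m_form m x x = 3^(2*0+1) * (w::int)" and w: "\<not> 3 dvd w"
    show "\<exists>z k. k \<le> m \<and> (\<forall>i<K. I1m_form m z (u i) = 0) \<and> 3 dvd I1m_form m z z \<and> \<not> 3 dvd z k"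
    proof (cases "\<exists>k\<le>m. \<not> 3 dvd x k")
      case True
      then obtain k where k: "k \<le> m" "\<not> 3 dvd x k" by blast
      have "3 dvd (3::int)^(2*0+1)" by (rule dvd_power) auto
      then have "3 dvd I1m_form m x x" using xx by simp
      then show ?thesis using o k by blast
    next
      case False
      define x' where "x' = (\<lambda>k. x k div 3)"
      have "I1m_form m x x = I1m_form m (\<lambda>k. 3 * x' k) x" using False unfolding x'_def by (intro F_cong) auto
      also have "\<dots> = 3 * I1m_form m x x'" by (simp add: F_scale F_sym)
      also have "I1m_form m x x' = I1m_form m (\<lambda>k. 3 * x' k) x'" using False unfolding x'_def by (intro F_cong) auto
      finally have "I1m_form m x x = 9 * I1m_form m x' x'" by (simp add: F_scale)
      then have "3 * w = 9 * I1m_form m x' x'" using xx by simp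
      then have "3 dvd w" by presburger
      then show ?thesis using w by simp
    qed
  qed
next
  case (Suc s)
  show ?case
  proof (intro allI impI)
    fix x w
    assume o: "\<forall>i<K. I1m_form m x (u i) = 0" and xx: "I1m_form m x x = 3^(2*Suc s+1) * (w::int)" and w: "\<not> 3 dvd w"
    show "\<exists>z k. k \<le> m \<and> (\<forall>i<K. I1m_form m z (u i) = 0) \<and> 3 dvd I1m_form m z z \<and> \<not> 3 dvd z k"
    proof (cases "\<exists>k\<le>m. \<not> 3 dvd x k")
      case True
      then obtain k where k: "k \<le> m" "\<not> 3 dvd x k" by blast
      have "3 dvd (3::int)^(2*Suc s+1)" by (rule dvd_power) auto
      then have "3 dvd I1m_form m x x" using xx by simp
      then show ?thesis using o k by blast
    next
      case False
      define x' where "x' = (\<lambda>k. x k div 3)"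
      have sc: "\<And>y. I1m_form m x y = 3 * I1m_form m x' y"
      proof -
        fix y
        have "I1m_form m x y = I1m_form m (\<lambda>k. 3 * x' k) y" using False unfolding x'_def by (intro F_cong) auto
        then show "I1m_form m x y = 3 * I1m_form m x' y" by (simp add: F_scale)
      qed
      have "I1m_form m x x = 9 * I1m_form m x' x'" using sc[of x] sc[of x'] F_sym[of m x x'] by simp
      then have "9 * I1m_form m x' x' = 9 * (3^(2*s+1) * w)" using xx by (simp add: power_add power_mult)
      then have x'x': "I1m_form m x' x' = 3^(2*s+1) * w" by simp
      have "\<forall>i<K. I1m_form m x' (u i) = 0" using o sc by simp
      then show ?thesis using Suc x'x' w by blast
    qed
  qed
qed

lemma det_part:
  fixes z :: "nat \<Rightarrow> int" and u :: "nat \<Rightarrow> nat \<Rightarrow> int"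
  assumes mK: "m = Suc K" and k: "k \<le> m" and orth: "\<forall>i<K. I1m_form m z (u i) = 0"
  shows "\<exists>x X. x^2 * (-1)^m = - ((I1m_form m (\<lambda>j. if j = k then 1 else 0) z)^2) * det (mat K K (\<lambda>(i,j). I1m_form m (u i) (u j))) + I1m_form m z z * X"
proof -
  define ek where "ek = (\<lambda>j::nat. if j = k then 1 else (0::int))"
  define R where "R = (\<lambda>i. if i = 0 then ek else if i = 1 then z else u (i - 2))"
  define sg where "sg = (\<lambda>j::nat. if j = 0 then (1::int) else -1)"
  define B where "B = mat (Suc m) (Suc m) (\<lambda>(i,j). R i j)"
  define J where "J = mat (Suc m) (Suc m) (\<lambda>(i,j). if i = j then sg i else 0)"
  define G where "G = mat (Suc m) (Suc m) (\<lambda>(i,j). I1m_form m (R i) (R j))"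
  have Bc: "B \<in> carrier_mat (Suc m) (Suc m)" unfolding B_def by simp
  have Jc: "J \<in> carrier_mat (Suc m) (Suc m)" unfolding J_def by simp
  have BJ: "B * J = mat (Suc m) (Suc m) (\<lambda>(i,j). R i j * sg j)"
  proof (rule eq_matI)
    fix i j assume "i < dim_row (mat (Suc m) (Suc m) (\<lambda>(i,j). R i j * sg j))" "j < dim_col (mat (Suc m) (Suc m) (\<lambda>(i,j). R i j * sg j))"
    then have ij: "i < Suc m" "j < Suc m" by auto
    have "(B * J) $$ (i,j) = (\<Sum>t\<in>{0..<Suc m}. R i t * (if t = j then sg t else 0))"
      using ij unfolding B_def J_def by (simp add: scalar_prod_def)
    also have "\<dots> = (\<Sum>t\<in>{0..<Suc m}. if t = j then R i t * sg t else 0)" by (rule sum.cong) auto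
    also have "\<dots> = R i j * sg j" using ij by (simp add: sum.delta)
    finally show "(B * J) $$ (i,j) = mat (Suc m) (Suc m) (\<lambda>(i,j). R i j * sg j) $$ (i,j)" using ij by simp
  qed (auto simp: B_def J_def)
  have GBJ: "G = (B * J) * transpose_mat B"
  proof (rule eq_matI)
    fix i j assume "i < dim_row ((B * J) * transpose_mat B)" "j < dim_col ((B * J) * transpose_mat B)"
    then have ij: "i < Suc m" "j < Suc m" by (auto simp: B_def J_def)
    have "((B * J) * transpose_mat B) $$ (i,j) = (\<Sum>t\<in>{0..<Suc m}. R i t * sg t * R j t)"
      using ij unfolding BJ by (simp add: scalar_prod_def B_def)
    also have "\<dots> = I1m_form m (R i) (R j)" unfolding F_sum[of m] sg_def by (simp add: atLeast0LessThan)
    finally show "G $$ (i,j) = ((B * J) * transpose_mat B) $$ (i,j)" using ij unfolding G_def by simp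
  qed (auto simp: G_def B_def J_def)
  have dJ: "det J = (-1)^m"
  proof -
    have "det J = (\<Prod>i<Suc m. sg i)" unfolding J_def by (rule det_diag)
    also have "\<dots> = sg 0 * (\<Prod>i<m. sg (Suc i))" by (rule prod.lessThan_Suc_shift)
    finally show ?thesis unfolding sg_def by simp
  qed
  have dG1: "det G = det B ^ 2 * (-1)^m"
  proof -
    have "det G = det (B * J) * det (transpose_mat B)"
      unfolding GBJ by (rule det_mult) (use Bc Jc in auto)
    also have "det (B * J) = det B * det J" by (rule det_mult[OF Bc Jc])
    also have "det (transpose_mat B) = det B" by (rule det_transpose[OF Bc])
    finally show ?thesis using dJ by (simp add: power2_eq_square)
  qed
  have Gc: "G \<in> carrier_mat (Suc m) (Suc m)" unfolding G_def by simp
  have "det G = (\<Sum>j<Suc m. G $$ (1,j) * cofactor G 1 j)"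
    by (rule laplace_expansion_row[OF Gc]) (simp add: mK)
  also have "\<dots> = G $$ (1,0) * cofactor G 1 0 + (G $$ (1,1) * cofactor G 1 1 + (\<Sum>j<K. G $$ (1,Suc (Suc j)) * cofactor G 1 (Suc (Suc j))))"
    unfolding mK by (simp only: sum.lessThan_Suc_shift One_nat_def)
  also have "(\<Sum>j<K. G $$ (1,Suc (Suc j)) * cofactor G 1 (Suc (Suc j))) = 0"
    using orth by (intro sum.neutral) (auto simp: G_def R_def mK)
  also have "G $$ (1,0) = I1m_form m z ek" unfolding G_def R_def by (simp add: mK)
  also have "G $$ (1,1) = I1m_form m z z" unfolding G_def R_def by (simp add: mK)
  also have "cofactor G 1 0 = - det (mat (Suc K) (Suc K) (\<lambda>(i,j). I1m_form m (R (if i = 0 then 0 else Suc i)) (R (Suc j))))"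
    unfolding cofactor_def G_def mat_delete_def
    by (simp add: mK, rule arg_cong[where f=det], rule eq_matI, auto)
  also have "det (mat (Suc K) (Suc K) (\<lambda>(i,j). I1m_form m (R (if i = 0 then 0 else Suc i)) (R (Suc j))))
     = I1m_form m (R 0) (R (Suc 0)) * det (mat K K (\<lambda>(i,j). I1m_form m (R (Suc (Suc i))) (R (Suc (Suc j)))))"
    by (rule det_first_col[where f="\<lambda>i j. I1m_form m (R (if i = 0 then 0 else Suc i)) (R (Suc j))", simplified])
       (use orth in \<open>auto simp: R_def F_sym\<close>)
  also have "mat K K (\<lambda>(i,j). I1m_form m (R (Suc (Suc i))) (R (Suc (Suc j)))) = mat K K (\<lambda>(i,j). I1m_form m (u i) (u j))"
    by (rule eq_matI) (auto simp: R_def)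
  also have "I1m_form m (R 0) (R (Suc 0)) = I1m_form m z ek" unfolding R_def by (simp add: F_sym)
  finally have "det G = - ((I1m_form m z ek)^2) * det (mat K K (\<lambda>(i,j). I1m_form m (u i) (u j))) + I1m_form m z z * cofactor G 1 1"
    by (simp add: power2_eq_square)
  then have "det B ^ 2 * (-1)^m = - ((I1m_form m ek z)^2) * det (mat K K (\<lambda>(i,j). I1m_form m (u i) (u j))) + I1m_form m z z * cofactor G 1 1"
    using dG1 by (simp add: F_sym)
  then show ?thesis unfolding ek_def by blast
qed

lemma final_arith:
  fixes x s c' e X q Q :: int
  assumes s: "s = 1 \<or> s = -1" and main: "x^2 * (- s) = - (3*c'+1) * (16 * (s * q)) + 3*e*X"
    and q: "q = 3*Q - 1"
  shows "\<exists>Y. x^2 = 3*Y + 2"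
proof -
  have ss: "s * s = 1" using s by auto
  have h: "x^2 = (3*c'+1) * 16 * q - 3*e*X*s"
    using s
  proof
    assume "s = 1" then show ?thesis using main by (simp add: algebra_simps)
  next
    assume "s = -1" then show ?thesis using main by (simp add: algebra_simps)
  qed
  show ?thesis
    by (rule exI[of _ "16*Q*(3*c'+1) - 16*c' - 6 - e*X*s"]) (simp add: h q algebra_simps)
qed

lemma mod3_contra: "\<forall>X2 Y t::int. X2 = 3*Y+2 \<longrightarrow> (X2 = 3*t \<or> X2 = 3*t+1) \<longrightarrow> False"
  by presburger

theorem lemma6p7:
  fixes l :: nat and ns :: "int list"
  assumes "l \<ge> 6" and "length ns = l" and "ns \<in> T6"
  shows "\<not> (\<exists>v. isometric_embedding_into_I1 (l + 4) (N_gram ns) (l + 4) v)"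
proof
  assume "\<exists>v. isometric_embedding_into_I1 (l + 4) (N_gram ns) (l + 4) v"
  then obtain v where gram0: "\<forall>i<l+4. \<forall>j<l+4. I1m_form (l+4) (v i) (v j) = N_gram ns i j"
    unfolding isometric_embedding_into_I1_def by blast
  then have gram: "\<And>i j. i < l+4 \<Longrightarrow> j < l+4 \<Longrightarrow> I1m_form (l+4) (v i) (v j) = N_gram ns i j" by blast
  have l: "l \<ge> 6" "length ns = l" using assms by auto
  obtain n a where na: "n > 0" "D ns = 6*n^2" "D (tl ns) = 6*n*a - 1" using T6_D[OF assms(3)] by blast
  define r where "r = (\<lambda>i. D (drop (Suc i) ns))"
  define E where "E = (\<lambda>k. \<Sum>i<l. r i * v (4+i) k)"
  have Elin: "\<And>y. I1m_form (l+4) E y = (\<Sum>i<l. r i * I1m_form (l+4) (v (4+i)) y)"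
    unfolding E_def by (rule F_lin) simp
  have Ee: "\<And>j. j < l \<Longrightarrow> I1m_form (l+4) E (v (4+j)) = (if j = 0 then - D ns else 0)"
  proof -
    fix j assume j: "j < l"
    have "I1m_form (l+4) E (v (4+j)) = (\<Sum>i<l. r i * I1m_form (l+4) (v (4+i)) (v (4+j)))"
      by (rule Elin)
    also have "\<dots> = (\<Sum>i<length ns. D (drop (Suc i) ns) * L_gram ns i j)"
      using j l by (intro sum.cong) (auto simp: gram N_gram_def r_def)
    also have "\<dots> = (if j = 0 then - D ns else 0)" using chain_sum[of j ns] j l by simp
    finally show "I1m_form (l+4) E (v (4+j)) = (if j = 0 then - D ns else 0)" .
  qed
  have Ea: "\<And>a. a < 4 \<Longrightarrow> I1m_form (l+4) E (v a) = 0"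
  proof -
    fix a :: nat assume a: "a < 4"
    have "I1m_form (l+4) E (v a) = (\<Sum>i<l. r i * I1m_form (l+4) (v (4+i)) (v a))" by (rule Elin)
    also have "\<dots> = 0" using a by (intro sum.neutral) (auto simp: gram N_gram_def)
    finally show "I1m_form (l+4) E (v a) = 0" .
  qed
  define u where "u = (\<lambda>i. v (if i < 4 then i else Suc i))"
  have Eu: "\<forall>i<l+3. I1m_form (l+4) E (u i) = 0"
  proof (intro allI impI)
    fix i assume i: "i < l+3"
    show "I1m_form (l+4) E (u i) = 0"
    proof (cases "i < 4")
      case True
      then show ?thesis using Ea unfolding u_def by simp
    next
      case False
      then have "Suc i = 4 + (i - 3)" "i - 3 < l" "i - 3 \<noteq> 0" using i by auto
      then show ?thesis using Ee[of "i-3"] False unfolding u_def by simp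
    qed
  qed
  have EE: "I1m_form (l+4) E E = - (D (tl ns) * D ns)"
  proof -
    have "I1m_form (l+4) E E = (\<Sum>i<l. r i * I1m_form (l+4) E (v (4+i)))"
      using Elin[of E] by (simp add: F_sym)
    also have "\<dots> = (\<Sum>i<l. if i = 0 then r i * (- D ns) else 0)"
      using Ee by (intro sum.cong) auto
    also have "\<dots> = r 0 * (- D ns)" using l by (simp add: sum.delta)
    also have "r 0 = D (tl ns)" unfolding r_def by (simp add: drop_Suc)
    finally show ?thesis by simp
  qed
  obtain t b where nb: "n = 3^t * b" "\<not> 3 dvd b" using pow3_decomp[of n] na by auto
  obtain c where c: "b^2 = 3*c + 1" using sq_mod3'[OF nb(2)] by blast
  define w where "w = - (2 * b^2 * (6*n*a - 1))"
  have n2: "n^2 = 3^(2*t) * b^2" unfolding nb by (simp add: power_mult_distrib power_mult[symmetric] mult.commute)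
  have EEw: "I1m_form (l+4) E E = 3^(2*t+1) * w"
    unfolding EE na(2,3) w_def n2 by (simp add: algebra_simps)
  have w3: "\<not> 3 dvd w"
  proof -
    have "w = 2 - 3 * (4*n*a*(3*c+1) - 2*c)" unfolding w_def c by (simp add: algebra_simps)
    then show ?thesis by presburger
  qed
  obtain z k where zk: "k \<le> l+4" "\<forall>i<l+3. I1m_form (l+4) z (u i) = 0" "3 dvd I1m_form (l+4) z z" "\<not> 3 dvd z k"
    using descent[where K="l+3" and m="l+4" and u=u and s=t] Eu EEw w3 by blast
  obtain x X where xX: "x^2 * (-1)^(l+4) = - ((I1m_form (l+4) (\<lambda>j. if j = k then 1 else 0) z)^2) * det (mat (l+3) (l+3) (\<lambda>(i,j). I1m_form (l+4) (u i) (u j))) + I1m_form (l+4) z z * X"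
    using det_part[of "l+4" "l+3" k z u] zk by auto
  obtain c0 cs where ns: "ns = c0 # cs" using l by (cases ns) auto
  have lcs: "length cs = l - 1" using l ns by simp
  have dG: "det (mat (l+3) (l+3) (\<lambda>(i,j). I1m_form (l+4) (u i) (u j))) = 16 * ((-1)^(l-1) * D (tl ns))"
  proof -
    have "mat (l+3) (l+3) (\<lambda>(i,j). I1m_form (l+4) (u i) (u j)) =
      mat (4+(l-1)) (4+(l-1)) (\<lambda>(i,j). if i<4 \<and> j<4 then (if i=j then -2 else 0) else if 4 \<le> i \<and> 4 \<le> j then L_gram cs (i-4) (j-4) else (0::int))"
    proof (rule eq_matI)
      fix i j assume ij: "i < dim_row (mat (4+(l-1)) (4+(l-1)) (\<lambda>(i,j). if i<4 \<and> j<4 then (if i=j then -2 else 0) else if 4 \<le> i \<and> 4 \<le> j then L_gram cs (i-4) (j-4) else (0::int)))"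
        "j < dim_col (mat (4+(l-1)) (4+(l-1)) (\<lambda>(i,j). if i<4 \<and> j<4 then (if i=j then -2 else 0) else if 4 \<le> i \<and> 4 \<le> j then L_gram cs (i-4) (j-4) else (0::int)))"
      then have ij': "i < l+3" "j < l+3" using l by auto
      have g: "I1m_form (l+4) (u i) (u j) = N_gram ns (if i < 4 then i else Suc i) (if j < 4 then j else Suc j)"
        unfolding u_def using ij' by (intro gram) auto
      show "mat (l+3) (l+3) (\<lambda>(i,j). I1m_form (l+4) (u i) (u j)) $$ (i,j) = mat (4+(l-1)) (4+(l-1)) (\<lambda>(i,j). if i<4 \<and> j<4 then (if i=j then -2 else 0) else if 4 \<le> i \<and> 4 \<le> j then L_gram cs (i-4) (j-4) else (0::int)) $$ (i,j)"
        using ij ij' l unfolding g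
      proof -
        have "N_gram ns (if i < 4 then i else Suc i) (if j < 4 then j else Suc j) = (if i<4 \<and> j<4 then (if i=j then -2 else 0) else if 4 \<le> i \<and> 4 \<le> j then L_gram cs (i-4) (j-4) else (0::int))"
        proof (cases "4 \<le> i \<and> 4 \<le> j")
          case True
          then have "Suc i - 4 = Suc (i - 4)" "Suc j - 4 = Suc (j - 4)" by auto
          then show ?thesis using True unfolding N_gram_def ns by (simp add: L_gram_Suc)
        next
          case False
          then show ?thesis unfolding N_gram_def by auto
        qed
        then show ?thesis using ij ij' l g by simp
      qed
    qed (use l in auto)
    then have "det (mat (l+3) (l+3) (\<lambda>(i,j). I1m_form (l+4) (u i) (u j))) = (-2)^4 * det (mat (l-1) (l-1) (\<lambda>(i,j). L_gram cs i j))"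
      using det_prefix[of 4 "l-1" "L_gram cs"] by simp
    also have "det (mat (l-1) (l-1) (\<lambda>(i,j). L_gram cs i j)) = (-1)^(l-1) * D cs"
      using det_chain[of cs] lcs by simp
    finally show ?thesis using ns by simp
  qed
  have sig: "(I1m_form (l+4) (\<lambda>j. if j = k then 1 else 0) z)^2 = (z k)^2"
    using F_unit[OF zk(1), of z] by (cases "k = 0") auto
  obtain c' where c': "(z k)^2 = 3*c' + 1" using sq_mod3'[OF zk(4)] by blast
  obtain e where e: "I1m_form (l+4) z z = 3 * e" using zk(3) by blast
  obtain l' where l': "l = Suc l'" using l by (cases l) auto
  define s where "s = ((-1::int)^l')"
  have s: "s = 1 \<or> s = -1" unfolding s_def by (cases "even l'") auto
  have p1: "(-1::int)^(l+4) = - s" unfolding s_def l' by (simp add: power_add)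
  have p2: "(-1::int)^(l-1) = s" unfolding s_def l' by simp
  have main: "x^2 * (- s) = - (3*c'+1) * (16 * (s * D (tl ns))) + I1m_form (l+4) z z * X"
    using xX unfolding p1 dG sig c' p2 .
  obtain Y where Y: "x^2 = 3*Y + 2"
    using final_arith[OF s main[unfolded e], of "2*n*a"] na(3) by (auto simp: algebra_simps)
  obtain t' where "x^2 = 3*t' \<or> x^2 = 3*t' + 1" using sq_mod3[of x] by blast
  then show False using mod3_contra Y by blast
qed

end
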